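(* Let $h,n\geq 2$ be integers. Every subgroup $U$ of $\{id\}\times S_n\leq G=S_h\times S_n$ is a neutrality group with respect to $(h,n)$, i.e. there exists a social preference function $F$ with $G_2(F)=U$. In particular, the set of neutrality groups with respect to $(h,n)$ is closed under taking subgroups and under conjugation by elements of $G$.
   Context: Permutations compose as $(\sigma\tau)(x)=\sigma(\tau(x))$; $[k]=\{1,\dots,k\}$. Let $H=[h]$ (individuals), $N=[n]$ (alternatives), $G=S_h\times S_n$. Linear orders on $N$ are identified with elements of $S_n$, and the set of preference profiles is $\mathcal{P}=(S_n)^h$. $G$ acts on $\mathcal{P}$ by $(p^{(\varphi,\psi)})_i=\psi\,p_{\varphi^{-1}(i)}$ for $i\in H$. A social preference function (SPF) is any function $F:\mathcal{P}\to S_n$. The symmetry group of $F$ is $G(F)=\{(\varphi,\psi)\in G: F(p^{(\varphi,\psi)})=\psi F(p)\ \forall p\in\mathcal{P}\}$, and its neutrality group is $G_2(F)=G(F)\cap(\{id\}\times S_n)$. A subgroup $U\leq\{id\}\times S_n$ is a neutrality group with respect to $(h,n)$ if $U=G_2(F)$ for some SPF $F$. *)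

theory Defs
  imports "HOL-Combinatorics.Permutations"
begin

definition perms :: "nat \<Rightarrow> (nat \<Rightarrow> nat) set" where
  "perms k = {p. p permutes {1..k}}"

definition Ggrp :: "nat \<Rightarrow> nat \<Rightarrow> ((nat \<Rightarrow> nat) \<times> (nat \<Rightarrow> nat)) set" where
  "Ggrp h n = perms h \<times> perms n"

definition profiles :: "nat \<Rightarrow> nat \<Rightarrow> (nat \<Rightarrow> (nat \<Rightarrow> nat)) set" where
  "profiles h n = {p. (\<forall>i\<in>{1..h}. p i \<in> perms n) \<and> (\<forall>i. i \<notin> {1..h} \<longrightarrow> p i = id)}"

definition act :: "nat \<Rightarrow> (nat \<Rightarrow> (nat \<Rightarrow> nat)) \<Rightarrow> (nat \<Rightarrow> nat) \<Rightarrow> (nat \<Rightarrow> nat) \<Rightarrow> (nat \<Rightarrow> (nat \<Rightarrow> nat))" where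
  "act h p \<phi> \<psi> = (\<lambda>i. if i \<in> {1..h} then \<psi> \<circ> p (inv \<phi> i) else id)"

text \<open>Social preference functions P -> S_n (only values on P matter).\<close>
definition is_SPF :: "nat \<Rightarrow> nat \<Rightarrow> ((nat \<Rightarrow> (nat \<Rightarrow> nat)) \<Rightarrow> (nat \<Rightarrow> nat)) \<Rightarrow> bool" where
  "is_SPF h n F \<longleftrightarrow> (\<forall>p\<in>profiles h n. F p \<in> perms n)"

definition symgroup :: "nat \<Rightarrow> nat \<Rightarrow> ((nat \<Rightarrow> (nat \<Rightarrow> nat)) \<Rightarrow> (nat \<Rightarrow> nat))
    \<Rightarrow> ((nat \<Rightarrow> nat) \<times> (nat \<Rightarrow> nat)) set" where
  "symgroup h n F = {(\<phi>, \<psi>) \<in> Ggrp h n. \<forall>p\<in>profiles h n. F (act h p \<phi> \<psi>) = \<psi> \<circ> F p}"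

definition neutgroup :: "nat \<Rightarrow> nat \<Rightarrow> ((nat \<Rightarrow> (nat \<Rightarrow> nat)) \<Rightarrow> (nat \<Rightarrow> nat))
    \<Rightarrow> ((nat \<Rightarrow> nat) \<times> (nat \<Rightarrow> nat)) set" where
  "neutgroup h n F = symgroup h n F \<inter> ({id} \<times> perms n)"

definition is_subgroup_G :: "nat \<Rightarrow> nat \<Rightarrow> ((nat \<Rightarrow> nat) \<times> (nat \<Rightarrow> nat)) set \<Rightarrow> bool" where
  "is_subgroup_G h n U \<longleftrightarrow> U \<subseteq> Ggrp h n \<and> (id, id) \<in> U \<and>
     (\<forall>a\<in>U. \<forall>b\<in>U. (fst a \<circ> fst b, snd a \<circ> snd b) \<in> U) \<and>
     (\<forall>a\<in>U. (inv (fst a), inv (snd a)) \<in> U)"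

definition is_neutrality_group :: "nat \<Rightarrow> nat \<Rightarrow> ((nat \<Rightarrow> nat) \<times> (nat \<Rightarrow> nat)) set \<Rightarrow> bool" where
  "is_neutrality_group h n U \<longleftrightarrow> U \<subseteq> {id} \<times> perms n \<and>
     (\<exists>F. is_SPF h n F \<and> neutgroup h n F = U)"

definition conjG :: "(nat \<Rightarrow> nat) \<times> (nat \<Rightarrow> nat) \<Rightarrow> ((nat \<Rightarrow> nat) \<times> (nat \<Rightarrow> nat)) set
    \<Rightarrow> ((nat \<Rightarrow> nat) \<times> (nat \<Rightarrow> nat)) set" where
  "conjG g U = (\<lambda>(a, b). (fst g \<circ> a \<circ> inv (fst g), snd g \<circ> b \<circ> inv (snd g))) ` U"

end

theory Submission
  imports Defs
begin

lemma perm_inv_comp: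
  assumes "p permutes S" shows "p \<circ> inv p = id" "inv p \<circ> p = id"
  using permutes_inv_o[OF assms] by auto

definition Rep :: "((nat \<Rightarrow> nat) \<times> (nat \<Rightarrow> nat)) set \<Rightarrow> (nat \<Rightarrow> nat) \<Rightarrow> (nat \<Rightarrow> nat)" where
  "Rep U \<sigma> = (SOME \<tau>. \<exists>u. (id, u) \<in> U \<and> \<tau> = u \<circ> \<sigma>)"

definition Fc :: "((nat \<Rightarrow> nat) \<times> (nat \<Rightarrow> nat)) set \<Rightarrow> (nat \<Rightarrow> (nat \<Rightarrow> nat)) \<Rightarrow> (nat \<Rightarrow> nat)" where
  "Fc U p = p 1 \<circ> inv (Rep U (p 1))"

lemma Rep_ex:
  assumes "is_subgroup_G h n U"
  shows "\<exists>u. (id, u) \<in> U \<and> Rep U \<sigma> = u \<circ> \<sigma>"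
proof -
  have "\<exists>\<tau> u. (id, u) \<in> U \<and> \<tau> = u \<circ> \<sigma>"
    using assms unfolding is_subgroup_G_def by auto
  then show ?thesis unfolding Rep_def by (metis (mono_tags, lifting) someI_ex)
qed

lemma Rep_shift:
  assumes sg: "is_subgroup_G h n U" and sub: "U \<subseteq> {id} \<times> perms n"
    and psi: "(id, \<psi>) \<in> U"
  shows "Rep U (\<psi> \<circ> \<sigma>) = Rep U \<sigma>"
proof -
  have pp: "\<psi> permutes {1..n}" using psi sub unfolding perms_def by auto
  have "{\<tau>. \<exists>u. (id, u) \<in> U \<and> \<tau> = u \<circ> (\<psi> \<circ> \<sigma>)} = {\<tau>. \<exists>u. (id, u) \<in> U \<and> \<tau> = u \<circ> \<sigma>}"
  proof (intro set_eqI iffI; simp)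
    fix \<tau> assume "\<exists>u. (id, u) \<in> U \<and> \<tau> = u \<circ> (\<psi> \<circ> \<sigma>)"
    then obtain u where u: "(id, u) \<in> U" "\<tau> = u \<circ> (\<psi> \<circ> \<sigma>)" by blast
    have "(id \<circ> id, u \<circ> \<psi>) \<in> U" using sg u psi unfolding is_subgroup_G_def by force
    then show "\<exists>u. (id, u) \<in> U \<and> \<tau> = u \<circ> \<sigma>" using u by (auto simp: o_assoc)
  next
    fix \<tau> assume "\<exists>u. (id, u) \<in> U \<and> \<tau> = u \<circ> \<sigma>"
    then obtain u where u: "(id, u) \<in> U" "\<tau> = u \<circ> \<sigma>" by blast
    have "(inv id, inv \<psi>) \<in> U" using sg psi unfolding is_subgroup_G_def by force
    then have "(id, inv \<psi>) \<in> U" by simp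
    then have "(id \<circ> id, u \<circ> inv \<psi>) \<in> U" using sg u unfolding is_subgroup_G_def by force
    moreover have "\<tau> = (u \<circ> inv \<psi>) \<circ> (\<psi> \<circ> \<sigma>)"
      using u perm_inv_comp(2)[OF pp] by (simp add: o_assoc[symmetric]) (metis comp_assoc comp_id)
    ultimately show "\<exists>ua. (id, ua) \<in> U \<and> \<tau> = ua \<circ> (\<psi> \<circ> \<sigma>)" by auto
  qed
  then have "\<And>\<tau>. (\<exists>u. (id, u) \<in> U \<and> \<tau> = u \<circ> (\<psi> \<circ> \<sigma>)) = (\<exists>u. (id, u) \<in> U \<and> \<tau> = u \<circ> \<sigma>)"
    by (simp add: set_eq_iff)
  then show ?thesis unfolding Rep_def by (simp only:)
qed

lemma act_id_at:
  assumes "i \<in> {1..h}" shows "act h p id \<psi> i = \<psi> \<circ> p i"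
  using assms unfolding act_def by simp

lemma act_in_profiles:
  assumes "p \<in> profiles h n" "\<psi> permutes {1..n}"
  shows "act h p id \<psi> \<in> profiles h n"
  using assms unfolding profiles_def perms_def act_def
  by (auto intro: permutes_compose)

lemma Fc_perm:
  assumes sg: "is_subgroup_G h n U" and sub: "U \<subseteq> {id} \<times> perms n"
    and p: "p 1 permutes {1..n}"
  shows "Fc U p permutes {1..n}"
proof -
  obtain u where u: "(id, u) \<in> U" "Rep U (p 1) = u \<circ> p 1" using Rep_ex[OF sg] by blast
  have "u permutes {1..n}" using u sub unfolding perms_def by auto
  then have "Rep U (p 1) permutes {1..n}" using u p by (simp add: permutes_compose)
  then show ?thesis unfolding Fc_def using p by (simp add: permutes_compose permutes_inv)
qed

lemma main_part:
  assumes h: "h \<ge> 2" and sg: "is_subgroup_G h n U" and sub: "U \<subseteq> {id} \<times> perms n"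
  shows "is_neutrality_group h n U"
  unfolding is_neutrality_group_def
proof (intro conjI exI[of _ "Fc U"])
  show "U \<subseteq> {id} \<times> perms n" by fact
  have one: "1 \<in> {1..h}" using h by simp
  show "is_SPF h n (Fc U)" unfolding is_SPF_def
  proof
    fix p assume "p \<in> profiles h n"
    then have "p 1 permutes {1..n}" using one unfolding profiles_def perms_def by auto
    then show "Fc U p \<in> perms n" using Fc_perm[OF sg sub] unfolding perms_def by auto
  qed
  show "neutgroup h n (Fc U) = U"
  proof (intro set_eqI iffI)
    fix x assume x: "x \<in> U"
    then obtain \<psi> where xe: "x = (id, \<psi>)" and pp: "\<psi> \<in> perms n" using sub by auto
    have "\<forall>p\<in>profiles h n. Fc U (act h p id \<psi>) = \<psi> \<circ> Fc U p"
    proof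
      fix p assume "p \<in> profiles h n"
      have "act h p id \<psi> 1 = \<psi> \<circ> p 1" using act_id_at[OF one] .
      then show "Fc U (act h p id \<psi>) = \<psi> \<circ> Fc U p"
        unfolding Fc_def using Rep_shift[OF sg sub, of \<psi> "p 1"] x xe by (simp add: o_assoc)
    qed
    moreover have "id \<in> perms h" unfolding perms_def by (simp add: permutes_id)
    ultimately show "x \<in> neutgroup h n (Fc U)"
      unfolding neutgroup_def symgroup_def Ggrp_def using xe pp by auto
  next
    fix x assume x: "x \<in> neutgroup h n (Fc U)"
    then obtain \<psi> where xe: "x = (id, \<psi>)" and pp: "\<psi> permutes {1..n}"
      and eq: "\<forall>p\<in>profiles h n. Fc U (act h p id \<psi>) = \<psi> \<circ> Fc U p"
      unfolding neutgroup_def symgroup_def perms_def by auto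
    define p0 :: "nat \<Rightarrow> nat \<Rightarrow> nat" where "p0 = (\<lambda>i. id)"
    have p0: "p0 \<in> profiles h n" unfolding p0_def profiles_def perms_def by (simp add: permutes_id)
    have a1: "act h p0 id \<psi> 1 = \<psi>" using act_id_at[OF one] unfolding p0_def by simp
    have e: "\<psi> \<circ> inv (Rep U \<psi>) = \<psi> \<circ> inv (Rep U id)"
    proof -
      have "Fc U (act h p0 id \<psi>) = \<psi> \<circ> Fc U p0" using eq p0 by blast
      then show ?thesis unfolding Fc_def using a1 by (simp add: p0_def)
    qed
    obtain u where u: "(id, u) \<in> U" "Rep U id = u" using Rep_ex[OF sg, of id] by auto
    obtain u' where u': "(id, u') \<in> U" "Rep U \<psi> = u' \<circ> \<psi>" using Rep_ex[OF sg, of \<psi>] by auto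
    have up: "u permutes {1..n}" "u' permutes {1..n}" using u u' sub unfolding perms_def by auto
    have "inv (u' \<circ> \<psi>) = inv \<psi> \<circ> inv u'"
      using o_inv_distrib permutes_bij up pp by blast
    then have "inv u' = \<psi> \<circ> inv u" using e u u' perm_inv_comp[OF pp]
      by (metis comp_assoc comp_id id_comp)
    then have "inv u' \<circ> u = \<psi>" using perm_inv_comp[OF up(1)] by (metis comp_assoc comp_id)
    moreover have "(inv id, inv u') \<in> U" using sg u' unfolding is_subgroup_G_def by force
    then have "(id \<circ> id, inv u' \<circ> u) \<in> U" using sg u unfolding is_subgroup_G_def by force
    ultimately show "x \<in> U" using xe by simp
  qed
qed


lemma act_act: "act h (act h p id b) id a = act h p id (a \<circ> b)"
  unfolding act_def by (auto simp: o_assoc)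

lemma act_idid: "p \<in> profiles h n \<Longrightarrow> act h p id id = p"
  unfolding act_def profiles_def by auto

lemma neut_subgroup:
  shows "is_subgroup_G h n (neutgroup h n F)"
  unfolding is_subgroup_G_def
proof (intro conjI ballI)
  show "neutgroup h n F \<subseteq> Ggrp h n" unfolding neutgroup_def symgroup_def by auto
  have idp: "id \<in> perms k" for k unfolding perms_def by (simp add: permutes_id)
  show "(id, id) \<in> neutgroup h n F"
    unfolding neutgroup_def symgroup_def Ggrp_def using idp act_idid by auto
  fix a assume a: "a \<in> neutgroup h n F"
  then obtain \<alpha> where ae: "a = (id, \<alpha>)" and ap: "\<alpha> permutes {1..n}"
      and eqa: "\<forall>p\<in>profiles h n. F (act h p id \<alpha>) = \<alpha> \<circ> F p"
      unfolding neutgroup_def symgroup_def perms_def by auto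
  {
    fix b assume b: "b \<in> neutgroup h n F"
    then obtain \<beta> where be: "b = (id, \<beta>)" and bp: "\<beta> permutes {1..n}"
      and eqb: "\<forall>p\<in>profiles h n. F (act h p id \<beta>) = \<beta> \<circ> F p"
      unfolding neutgroup_def symgroup_def perms_def by auto
    have "\<forall>p\<in>profiles h n. F (act h p id (\<alpha> \<circ> \<beta>)) = (\<alpha> \<circ> \<beta>) \<circ> F p"
    proof
      fix p assume p: "p \<in> profiles h n"
      have "F (act h p id (\<alpha> \<circ> \<beta>)) = F (act h (act h p id \<beta>) id \<alpha>)" by (simp add: act_act)
      also have "\<dots> = \<alpha> \<circ> F (act h p id \<beta>)" using eqa act_in_profiles[OF p bp] by blast
      also have "\<dots> = (\<alpha> \<circ> \<beta>) \<circ> F p" using eqb p by (simp add: o_assoc)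
      finally show "F (act h p id (\<alpha> \<circ> \<beta>)) = (\<alpha> \<circ> \<beta>) \<circ> F p" .
    qed
    moreover have "\<alpha> \<circ> \<beta> \<in> perms n" using ap bp unfolding perms_def by (simp add: permutes_compose)
    ultimately show "(fst a \<circ> fst b, snd a \<circ> snd b) \<in> neutgroup h n F"
      using ae be idp unfolding neutgroup_def symgroup_def Ggrp_def by auto
  }
  have ip: "inv \<alpha> permutes {1..n}" using ap by (simp add: permutes_inv)
  have "\<forall>p\<in>profiles h n. F (act h p id (inv \<alpha>)) = inv \<alpha> \<circ> F p"
  proof
    fix p assume p: "p \<in> profiles h n"
    have "act h (act h p id (inv \<alpha>)) id \<alpha> = p"
      using act_act perm_inv_comp(1)[OF ap] act_idid[OF p] by metis
    then have "F p = \<alpha> \<circ> F (act h p id (inv \<alpha>))" using eqa act_in_profiles[OF p ip] by metis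
    then have "inv \<alpha> \<circ> F p = (inv \<alpha> \<circ> \<alpha>) \<circ> F (act h p id (inv \<alpha>))" by (simp add: o_assoc)
    then show "F (act h p id (inv \<alpha>)) = inv \<alpha> \<circ> F p" using perm_inv_comp(2)[OF ap] by simp
  qed
  then show "(inv (fst a), inv (snd a)) \<in> neutgroup h n F"
    using ae ip idp unfolding neutgroup_def symgroup_def Ggrp_def perms_def by auto
qed

lemma conj_subgroup:
  assumes sg: "is_subgroup_G h n U" and sub: "U \<subseteq> {id} \<times> perms n" and g: "g \<in> Ggrp h n"
  shows "is_subgroup_G h n (conjG g U) \<and> conjG g U \<subseteq> {id} \<times> perms n"
proof -
  obtain \<phi> \<psi> where ge: "g = (\<phi>, \<psi>)" and php: "\<phi> permutes {1..h}" and psp: "\<psi> permutes {1..n}"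
    using g unfolding Ggrp_def perms_def by auto
  define c where "c b = \<psi> \<circ> b \<circ> inv \<psi>" for b :: "nat \<Rightarrow> nat"
  have fi: "\<phi> \<circ> id \<circ> inv \<phi> = id" using perm_inv_comp(1)[OF php] by simp
  have CE: "conjG g U = (\<lambda>(a, b). (id, c b)) ` U"
    unfolding conjG_def ge c_def
  proof (rule image_cong[OF refl])
    fix x assume "x \<in> U"
    then have "fst x = id" using sub by auto
    then show "(case x of (a, b) \<Rightarrow> (fst (\<phi>, \<psi>) \<circ> a \<circ> inv (fst (\<phi>, \<psi>)), snd (\<phi>, \<psi>) \<circ> b \<circ> inv (snd (\<phi>, \<psi>))))
       = (case x of (a, b) \<Rightarrow> (id, \<psi> \<circ> b \<circ> inv \<psi>))" using fi by (cases x) simp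
  qed
  have CE2: "conjG g U = (\<lambda>x. (id, c (snd x))) ` U"
    unfolding CE by (rule image_cong) auto
  have Uform: "x \<in> U \<Longrightarrow> x = (id, snd x) \<and> snd x permutes {1..n}" for x
    using sub unfolding perms_def by auto
  have cperm: "b permutes {1..n} \<Longrightarrow> c b permutes {1..n}" for b
    unfolding c_def using psp by (simp add: permutes_compose permutes_inv)
  have cid: "c id = id" unfolding c_def using perm_inv_comp(1)[OF psp] by simp
  have ccomp: "c a \<circ> c b = c (a \<circ> b)" for a b
    unfolding c_def using perm_inv_comp(2)[OF psp] by (simp add: comp_assoc) (metis comp_assoc comp_id)
  have cinv: "b permutes {1..n} \<Longrightarrow> inv (c b) = c (inv b)" for b
  proof -
    assume bp: "b permutes {1..n}"
    have bb: "bij b" "bij \<psi>" "bij (inv \<psi>)" using bp psp permutes_bij permutes_inv by blast+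
    have "inv (c b) = inv (inv \<psi>) \<circ> inv (\<psi> \<circ> b)" unfolding c_def
      using o_inv_distrib bb bij_comp by blast
    also have "\<dots> = \<psi> \<circ> (inv b \<circ> inv \<psi>)" using o_inv_distrib bb inv_inv_eq by metis
    finally show ?thesis unfolding c_def by (simp add: comp_assoc)
  qed
  have sub2: "conjG g U \<subseteq> {id} \<times> perms n"
    unfolding CE2 using Uform cperm unfolding perms_def by auto
  have idp: "id \<in> perms k" for k unfolding perms_def by (simp add: permutes_id)
  have "is_subgroup_G h n (conjG g U)"
    unfolding is_subgroup_G_def
  proof (intro conjI ballI)
    show "conjG g U \<subseteq> Ggrp h n" using sub2 idp unfolding Ggrp_def by auto
    have "(id, id) \<in> U" using sg unfolding is_subgroup_G_def by auto
    then show "(id, id) \<in> conjG g U" unfolding CE2 using cid by force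
    fix a assume "a \<in> conjG g U"
    then obtain x where x: "x \<in> U" and ae: "a = (id, c (snd x))" unfolding CE2 by auto
    {
      fix b assume "b \<in> conjG g U"
      then obtain y where y: "y \<in> U" and be: "b = (id, c (snd y))" unfolding CE2 by auto
      have "(fst x \<circ> fst y, snd x \<circ> snd y) \<in> U" using sg x y unfolding is_subgroup_G_def by auto
      then have "(id, snd x \<circ> snd y) \<in> U" using Uform x y by (metis comp_id prod.sel(1))
      then show "(fst a \<circ> fst b, snd a \<circ> snd b) \<in> conjG g U"
        unfolding CE2 using ae be ccomp by (force intro: image_eqI[where x="(id, snd x \<circ> snd y)"])
    }
    have "(inv (fst x), inv (snd x)) \<in> U" using sg x unfolding is_subgroup_G_def by auto
    then have "(id, inv (snd x)) \<in> U" using Uform x by (metis inv_id prod.sel(1))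
    then show "(inv (fst a), inv (snd a)) \<in> conjG g U"
      unfolding CE2 using ae cinv Uform[OF x] by (force intro: image_eqI[where x="(id, inv (snd x))"])
  qed
  then show ?thesis using sub2 by blast
qed

theorem mainTheorem1:
  fixes h n :: nat
  assumes "h \<ge> 2" and "n \<ge> 2"
  shows "(\<forall>U. is_subgroup_G h n U \<and> U \<subseteq> {id} \<times> perms n \<longrightarrow> is_neutrality_group h n U)
    \<and> (\<forall>U V. is_neutrality_group h n U \<and> is_subgroup_G h n V \<and> V \<subseteq> U \<longrightarrow> is_neutrality_group h n V)
    \<and> (\<forall>U g. is_neutrality_group h n U \<and> g \<in> Ggrp h n \<longrightarrow> is_neutrality_group h n (conjG g U))"
proof (intro conjI allI impI)
  fix U assume "is_subgroup_G h n U \<and> U \<subseteq> {id} \<times> perms n"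
  then show "is_neutrality_group h n U" using main_part assms(1) by blast
next
  fix U V assume a: "is_neutrality_group h n U \<and> is_subgroup_G h n V \<and> V \<subseteq> U"
  then have "V \<subseteq> {id} \<times> perms n" unfolding is_neutrality_group_def by blast
  then show "is_neutrality_group h n V" using main_part assms(1) a by blast
next
  fix U g assume a: "is_neutrality_group h n U \<and> g \<in> Ggrp h n"
  then obtain F where "neutgroup h n F = U" and s: "U \<subseteq> {id} \<times> perms n"
    unfolding is_neutrality_group_def by blast
  then have "is_subgroup_G h n U" using neut_subgroup by blast
  then show "is_neutrality_group h n (conjG g U)"
    using conj_subgroup[OF _ s] a main_part assms(1) by blast
qed

end
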